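(* Let $V=K[y_1,\dots,y_s]$ be a polynomial ring over a field $K$, bigraded by $\operatorname{bideg}(y_i)=(d_i,1)$ with integers $d_i\ge1$, and let $M$ be a finitely generated bigraded $V$-module. For each $k$ with $M_{( *,k)}:=\bigoplus_d M_{(d,k)}\neq0$ put $\alpha_M(k)=\min\{d:M_{(d,k)}\neq0\}$ and $\omega_M(k)=\max\{d:M_{(d,k)}\neq0\}$. Then either $M_{( *,k)}=0$ for all $k\gg0$, or there exist integers $a,b,c,e$ such that $\alpha_M(k)=ak+b$ and $\omega_M(k)=ck+e$ for all $k\gg0$. *)

theory Defs
  imports Complex_Main "HOL-Library.Poly_Mapping"
begin

text \<open>Polynomial ring V = K[y_i | i :: 'v] in finitely many variables indexed by a
  finite type 'v (so s = CARD('v)), represented as finitely supported maps from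
  monomials (exponent vectors) to coefficients in K.\<close>
type_synonym ('v, 'k) mpoly = "('v \<Rightarrow>\<^sub>0 nat) \<Rightarrow>\<^sub>0 'k"

definition mono_bideg :: "('v::finite \<Rightarrow> int) \<Rightarrow> ('v \<Rightarrow>\<^sub>0 nat) \<Rightarrow> int \<times> int" where
  "mono_bideg dg a = ((\<Sum>i\<in>UNIV. int (Poly_Mapping.lookup a i) * dg i), (\<Sum>i\<in>UNIV. int (Poly_Mapping.lookup a i)))"

definition bihomogeneous :: "('v::finite \<Rightarrow> int) \<Rightarrow> ('v, 'k::zero) mpoly \<Rightarrow> int \<Rightarrow> int \<Rightarrow> bool" where
  "bihomogeneous dg p e j \<longleftrightarrow> (\<forall>a \<in> Poly_Mapping.keys p. mono_bideg dg a = (e, j))"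

text \<open>M (carrier: the type 'm, with V-scalar multiplication scale) is a bigraded
  V-module with homogeneous components Mg d k = M_(d,k):
  each component is an additive subgroup, V_(e,j) M_(d,k) \<subseteq> M_(d+e,k+j),
  and M is the internal direct sum of its components.\<close>
definition bigraded_module ::
  "('v::finite \<Rightarrow> int) \<Rightarrow> (('v, 'k::field) mpoly \<Rightarrow> 'm::ab_group_add \<Rightarrow> 'm)
     \<Rightarrow> (int \<Rightarrow> int \<Rightarrow> 'm set) \<Rightarrow> bool" where
  "bigraded_module dg scale Mg \<longleftrightarrow>
     module scale \<and>
     (\<forall>d k. 0 \<in> Mg d k \<and> (\<forall>x\<in>Mg d k. \<forall>y\<in>Mg d k. x + y \<in> Mg d k)) \<and>
     (\<forall>p e j d k x. bihomogeneous dg p e j \<longrightarrow> x \<in> Mg d k \<longrightarrow> scale p x \<in> Mg (d + e) (k + j)) \<and>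
     (\<forall>m. \<exists>!f :: int \<times> int \<Rightarrow> 'm.
          finite {q. f q \<noteq> 0} \<and> (\<forall>d k. f (d, k) \<in> Mg d k) \<and> m = (\<Sum>q\<in>{q. f q \<noteq> 0}. f q))"

definition finitely_generated_module ::
  "('r::comm_ring_1 \<Rightarrow> 'm::ab_group_add \<Rightarrow> 'm) \<Rightarrow> bool" where
  "finitely_generated_module scale \<longleftrightarrow> (\<exists>G. finite G \<and> module.span scale G = UNIV)"

end

theory Submission
  imports Defs
begin


definition ELmin :: "(int \<times> int) set \<Rightarrow> bool" where
"ELmin S \<longleftrightarrow> (\<exists>k0. \<forall>k\<ge>k0. \<forall>d. (d,k) \<notin> S) \<or>
   (\<exists>a b k0. \<forall>k\<ge>k0. (a*k+b,k) \<in> S \<and> (\<forall>d. (d,k) \<in> S \<longrightarrow> a*k+b \<le> d))"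

definition transl :: "int \<Rightarrow> int \<Rightarrow> (int \<times> int) set \<Rightarrow> (int \<times> int) set" where
"transl u v S = (\<lambda>(d,k). (d+u, k+v)) ` S"

lemma ELmin_empty: "ELmin {}" unfolding ELmin_def by auto

lemma lin_cmp:
  fixes a1 b1 a2 b2 :: int
  shows "\<exists>K. (\<forall>k\<ge>K. a1*k+b1 \<le> a2*k+b2) \<or> (\<forall>k\<ge>K. a2*k+b2 \<le> a1*k+b1)"
proof (cases "a1 = a2")
  case True then show ?thesis by (cases "b1 \<le> b2") auto
next
  case False
  show ?thesis
  proof (cases "a1 < a2")
    case True
    have "\<forall>k\<ge>max 0 (b1-b2). a1*k+b1 \<le> a2*k+b2"
    proof (intro allI impI)
      fix k :: int assume "k \<ge> max 0 (b1-b2)"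
      then have "(a2-a1)*k \<ge> 1*k" using True by (intro mult_right_mono) auto
      then show "a1*k+b1 \<le> a2*k+b2" using \<open>k \<ge> max 0 (b1-b2)\<close> by (simp add: algebra_simps)
    qed
    then show ?thesis by blast
  next
    case F: False
    have "\<forall>k\<ge>max 0 (b2-b1). a2*k+b2 \<le> a1*k+b1"
    proof (intro allI impI)
      fix k :: int assume "k \<ge> max 0 (b2-b1)"
      then have "(a1-a2)*k \<ge> 1*k" using F False by (intro mult_right_mono) auto
      then show "a2*k+b2 \<le> a1*k+b1" using \<open>k \<ge> max 0 (b2-b1)\<close> by (simp add: algebra_simps)
    qed
    then show ?thesis by blast
  qed
qed

lemma ELmin_Un:
  assumes "ELmin S" "ELmin T" shows "ELmin (S \<union> T)"
proof -
  consider (E1) k1 where "\<forall>k\<ge>k1. \<forall>d. (d,k) \<notin> S"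
    | (L1) a1 b1 k1 where "\<forall>k\<ge>k1. (a1*k+b1,k) \<in> S \<and> (\<forall>d. (d,k) \<in> S \<longrightarrow> a1*k+b1 \<le> d)"
    using assms(1) unfolding ELmin_def by blast
  then show ?thesis
  proof cases
    case E1
    consider (E2) k2 where "\<forall>k\<ge>k2. \<forall>d. (d,k) \<notin> T"
      | (L2) a2 b2 k2 where "\<forall>k\<ge>k2. (a2*k+b2,k) \<in> T \<and> (\<forall>d. (d,k) \<in> T \<longrightarrow> a2*k+b2 \<le> d)"
      using assms(2) unfolding ELmin_def by blast
    then show ?thesis
    proof cases
      case E2
      then show ?thesis unfolding ELmin_def using E1
        by (intro disjI1 exI[of _ "max k1 k2"]) auto
    next
      case L2
      show ?thesis unfolding ELmin_def
        by (rule disjI2, rule exI[of _ a2], rule exI[of _ b2], rule exI[of _ "max k1 k2"]) (use E1 L2 in auto)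
    qed
  next
    case L1
    consider (E2) k2 where "\<forall>k\<ge>k2. \<forall>d. (d,k) \<notin> T"
      | (L2) a2 b2 k2 where "\<forall>k\<ge>k2. (a2*k+b2,k) \<in> T \<and> (\<forall>d. (d,k) \<in> T \<longrightarrow> a2*k+b2 \<le> d)"
      using assms(2) unfolding ELmin_def by blast
    then show ?thesis
    proof cases
      case E2
      show ?thesis unfolding ELmin_def
        by (rule disjI2, rule exI[of _ a1], rule exI[of _ b1], rule exI[of _ "max k1 k2"]) (use E2 L1 in auto)
    next
      case L2
      obtain K where K: "(\<forall>k\<ge>K. a1*k+b1 \<le> a2*k+b2) \<or> (\<forall>k\<ge>K. a2*k+b2 \<le> a1*k+b1)"
        using lin_cmp by blast
      then show ?thesis
      proof
        assume H: "\<forall>k\<ge>K. a1*k+b1 \<le> a2*k+b2"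
        show ?thesis unfolding ELmin_def
        proof (rule disjI2, rule exI[of _ a1], rule exI[of _ b1], rule exI[of _ "max K (max k1 k2)"], intro allI impI conjI)
          fix k assume k: "max K (max k1 k2) \<le> k"
          show "(a1*k+b1,k) \<in> S \<union> T" using L1 k by auto
          fix d assume "(d,k) \<in> S \<union> T"
          then show "a1*k+b1 \<le> d" using L1 L2 H k
            by (metis Un_iff max.bounded_iff order_trans)
        qed
      next
        assume H: "\<forall>k\<ge>K. a2*k+b2 \<le> a1*k+b1"
        show ?thesis unfolding ELmin_def
        proof (rule disjI2, rule exI[of _ a2], rule exI[of _ b2], rule exI[of _ "max K (max k1 k2)"], intro allI impI conjI)
          fix k assume k: "max K (max k1 k2) \<le> k"
          show "(a2*k+b2,k) \<in> S \<union> T" using L2 k by auto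
          fix d assume "(d,k) \<in> S \<union> T"
          then show "a2*k+b2 \<le> d" using L1 L2 H k
            by (metis Un_iff max.bounded_iff order_trans)
        qed
      qed
    qed
  qed
qed

lemma ELmin_UN:
  assumes "finite A" "\<And>x. x \<in> A \<Longrightarrow> ELmin (S x)" shows "ELmin (\<Union>x\<in>A. S x)"
  using assms by (induction A rule: finite_induct) (auto intro: ELmin_Un ELmin_empty)

lemma ELmin_transl:
  assumes "ELmin S" shows "ELmin (transl u v S)"
proof -
  have mem: "(d,k) \<in> transl u v S \<longleftrightarrow> (d-u, k-v) \<in> S" for d k
    unfolding transl_def by (force simp: image_iff)
  consider (E1) k1 where "\<forall>k\<ge>k1. \<forall>d. (d,k) \<notin> S"
    | (L1) a1 b1 k1 where "\<forall>k\<ge>k1. (a1*k+b1,k) \<in> S \<and> (\<forall>d. (d,k) \<in> S \<longrightarrow> a1*k+b1 \<le> d)"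
    using assms(1) unfolding ELmin_def by blast
  then show ?thesis
  proof cases
    case E1
    then show ?thesis unfolding ELmin_def mem
      by (intro disjI1 exI[of _ "k1+v"]) auto
  next
    case L1
    show ?thesis unfolding ELmin_def mem
    proof (rule disjI2, rule exI[of _ a1], rule exI[of _ "b1 + u - a1*v"], rule exI[of _ "k1+v"], intro allI impI conjI)
      fix k assume k: "k1 + v \<le> k"
      then have "(a1*(k-v)+b1, k-v) \<in> S" using L1 by auto
      moreover have "a1*(k-v)+b1 = a1 * k + (b1 + u - a1 * v) - u" by (simp add: algebra_simps)
      ultimately show "(a1 * k + (b1 + u - a1 * v) - u, k - v) \<in> S" by simp
      fix d assume "(d-u,k-v) \<in> S"
      then have "a1*(k-v)+b1 \<le> d - u" using L1 k by auto
      then show "a1 * k + (b1 + u - a1 * v) \<le> d" by (simp add: algebra_simps)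
    qed
  qed
qed




lemma nat_incsub:
  fixes s :: "nat \<Rightarrow> nat"
  shows "\<exists>r. strict_mono r \<and> incseq (\<lambda>n. s (r n))"
proof -
  obtain f where f: "strict_mono f" "monoseq (\<lambda>n. s (f n))" using seq_monosub by blast
  show ?thesis
  proof (cases "incseq (\<lambda>n. s (f n))")
    case True then show ?thesis using f by blast
  next
    case False
    then have dec: "decseq (\<lambda>n. s (f n))" using f(2) unfolding monoseq_iff by blast
    obtain n0 where n0: "\<forall>n. s (f n0) \<le> s (f n)"
      using ex_has_least_nat[of "\<lambda>_. True" 0 "\<lambda>n. s (f n)"] by blast
    have "s (f (n + n0)) = s (f n0)" for n
      using dec n0 unfolding decseq_def by (metis le_add2 le_antisym)
    then have "incseq (\<lambda>n. s (f (n + n0)))" by (simp add: incseq_def)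
    moreover have "strict_mono (\<lambda>n. f (n + n0))"
      using f(1) by (simp add: strict_mono_def)
    ultimately show ?thesis by blast
  qed
qed

lemma dickson_sub:
  fixes f :: "nat \<Rightarrow> 'v \<Rightarrow> nat"
  assumes "finite S"
  shows "\<exists>r. strict_mono r \<and> (\<forall>x\<in>S. incseq (\<lambda>n. f (r n) x))"
  using assms
proof (induction S rule: finite_induct)
  case empty
  then show ?case by (rule exI[where x=id]) (auto simp: strict_mono_def)
next
  case (insert x S)
  then obtain r where r: "strict_mono r" "\<forall>y\<in>S. incseq (\<lambda>n. f (r n) y)" by blast
  obtain r' where r': "strict_mono r'" "incseq (\<lambda>n. f (r (r' n)) x)"
    using nat_incsub[of "\<lambda>n. f (r n) x"] by blast
  have "strict_mono (r \<circ> r')" using r(1) r'(1) by (rule strict_mono_o)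
  moreover have "incseq (\<lambda>n. f (r (r' n)) y)" if "y \<in> S" for y
    using r(2) that r'(1) unfolding incseq_def by (meson strict_mono_less_eq)
  ultimately show ?case using r'(2) by (intro exI[of _ "r \<circ> r'"]) (auto simp: o_def)
qed

lemma dickson:
  fixes f :: "nat \<Rightarrow> 'v::finite \<Rightarrow> nat"
  shows "\<exists>i j. i < j \<and> f i \<le> f j"
proof -
  obtain r where r: "strict_mono r" "\<forall>x\<in>UNIV. incseq (\<lambda>n. f (r n) x)"
    using dickson_sub[where S=UNIV and f=f] by auto
  have "f (r 0) \<le> f (r 1)" using r(2) unfolding le_fun_def incseq_def by auto
  moreover have "r 0 < r 1" using r(1) by (simp add: strict_mono_def)
  ultimately show ?thesis by blast
qed

lemma stabilize:
  fixes D :: "nat \<Rightarrow> ('v::finite \<Rightarrow> nat) set"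
  assumes dsc: "\<And>c. D (Suc c) \<subseteq> D c"
    and dcl: "\<And>c a b. a \<in> D c \<Longrightarrow> b \<le> a \<Longrightarrow> b \<in> D c"
  shows "\<exists>B. \<forall>c\<ge>B. D c = D B"
proof (rule ccontr)
  assume N: "\<not> ?thesis"
  have dec: "c \<le> c' \<Longrightarrow> D c' \<subseteq> D c" for c c'
    using decseq_SucI[of D] dsc unfolding decseq_def by blast
  have "\<exists>c\<ge>B. D (Suc c) \<noteq> D c" for B
  proof (rule ccontr)
    assume "\<not> (\<exists>c\<ge>B. D (Suc c) \<noteq> D c)"
    then have H: "\<forall>c\<ge>B. D (Suc c) = D c" by blast
    have "\<forall>c\<ge>B. D c = D B"
    proof (intro allI impI)
      fix c assume "B \<le> c"
      then show "D c = D B" by (induction rule: dec_induct) (use H in auto)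
    qed
    then show False using N by blast
  qed
  then obtain cc where cc: "\<And>B. cc B \<ge> B" "\<And>B. D (Suc (cc B)) \<noteq> D (cc B)" by metis
  have "\<exists>x. x \<in> D (cc B) \<and> x \<notin> D (Suc (cc B))" for B using cc(2)[of B] dsc[of "cc B"] by blast
  then obtain x where x: "\<And>B. x B \<in> D (cc B)" "\<And>B. x B \<notin> D (Suc (cc B))" by metis
  define h where "h j = ((\<lambda>B. Suc (cc B)) ^^ j) 0" for j
  have hS: "h (Suc j) = Suc (cc (h j))" for j unfolding h_def by simp
  have "h j < h (Suc j)" for j using hS cc(1) le_imp_less_Suc by presburger
  then have hm: "incseq h" by (simp add: incseq_SucI less_imp_le)
  obtain i j where ij: "i < j" "x (h i) \<le> x (h j)" using dickson[of "\<lambda>j. x (h j)"] by blast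
  have "h (Suc i) \<le> h j" using hm ij(1) unfolding incseq_def by simp
  then have "Suc (cc (h i)) \<le> cc (h j)" using hS cc(1) le_trans by metis
  then have "x (h j) \<in> D (Suc (cc (h i)))" using dec x(1) by blast
  then have "x (h i) \<in> D (Suc (cc (h i)))" using dcl ij(2) by blast
  then show False using x(2) by blast
qed




definition wt :: "('v::finite \<Rightarrow> int) \<Rightarrow> ('v \<Rightarrow> nat) \<Rightarrow> int" where
  "wt w a = (\<Sum>i\<in>UNIV. int (a i) * w i)"
definition dgr :: "('v::finite \<Rightarrow> nat) \<Rightarrow> int" where
  "dgr a = (\<Sum>i\<in>UNIV. int (a i))"
definition supp_set :: "('v::finite \<Rightarrow> int) \<Rightarrow> ('v \<Rightarrow> nat) set \<Rightarrow> (int \<times> int) set" where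
  "supp_set w C = (\<lambda>a. (wt w a, dgr a)) ` C"

lemma sum_upd_gen:
  fixes g :: "nat \<Rightarrow> 'v::finite \<Rightarrow> int"
  shows "(\<Sum>i\<in>UNIV. g ((a(j:=c)) i) i) = (\<Sum>i\<in>UNIV. g (a i) i) - g (a j) j + g c j"
proof -
  have "(\<Sum>i\<in>UNIV. g ((a(j:=c)) i) i) = g c j + (\<Sum>i\<in>UNIV-{j}. g ((a(j:=c)) i) i)"
    by (subst sum.remove[of UNIV j]) auto
  moreover have "(\<Sum>i\<in>UNIV. g (a i) i) = g (a j) j + (\<Sum>i\<in>UNIV-{j}. g (a i) i)"
    by (subst sum.remove[of UNIV j]) auto
  moreover have "(\<Sum>i\<in>UNIV-{j}. g ((a(j:=c)) i) i) = (\<Sum>i\<in>UNIV-{j}. g (a i) i)"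
    by (rule sum.cong) auto
  ultimately show ?thesis by simp
qed

lemma wt_upd: "wt w (a(j:=c)) = wt w a - int (a j) * w j + int c * w j"
  unfolding wt_def using sum_upd_gen[of "\<lambda>x i. int x * w i" a j c] by simp

lemma dgr_upd: "dgr (a(j:=c)) = dgr a - int (a j) + int c"
  unfolding dgr_def using sum_upd_gen[of "\<lambda>x i. int x" a j c] by simp

lemma wt_minus_dgr:
  assumes "\<forall>i. i \<notin> I \<longrightarrow> a i = 0" "\<forall>i\<in>I. m \<le> w i"
  shows "wt w a - m * dgr a \<ge> 0"
proof -
  have "wt w a - m * dgr a = (\<Sum>i\<in>UNIV. int (a i) * (w i - m))"
    unfolding wt_def dgr_def by (simp add: sum_distrib_left sum_subtractf algebra_simps)
  also have "\<dots> \<ge> 0"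
  proof (rule sum_nonneg)
    fix i :: 'a
    show "0 \<le> int (a i) * (w i - m)"
      using assms by (cases "i \<in> I") auto
  qed
  finally show ?thesis .
qed

lemma ELmin_closed:
  fixes E :: "('v::finite \<Rightarrow> nat) set"
  assumes supp: "\<forall>a\<in>E. \<forall>i. i \<notin> I \<longrightarrow> a i = 0" and i1: "\<forall>i\<in>I. w i1 \<le> w i"
    and cl: "\<forall>a\<in>E. \<forall>n. a(i1 := a i1 + n) \<in> E"
  shows "ELmin (supp_set w E)"
proof (cases "E = {}")
  case True then show ?thesis by (simp add: supp_set_def ELmin_empty)
next
  case False
  define m where "m = w i1"
  define f where "f a = wt w a - m * dgr a" for a
  have fnn: "f a \<ge> 0" if "a \<in> E" for a
    unfolding f_def m_def by (rule wt_minus_dgr[of I]) (use supp i1 that in auto)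
  obtain a0 where a0E: "a0 \<in> E" using False by blast
  obtain as where as: "as \<in> E" "\<forall>a. a \<in> E \<longrightarrow> nat (f as) \<le> nat (f a)"
    using ex_has_least_nat[of "\<lambda>a. a \<in> E" a0 "\<lambda>a. nat (f a)"] a0E by blast
  have asmin: "f as \<le> f a" if "a \<in> E" for a
    using as(2) that fnn[OF that] nat_le_eq_zle by blast
  show ?thesis unfolding ELmin_def
  proof (rule disjI2, rule exI[of _ m], rule exI[of _ "f as"], rule exI[of _ "dgr as"], intro allI impI conjI)
    fix k assume k: "dgr as \<le> k"
    define n where "n = nat (k - dgr as)"
    define a' where "a' = as(i1 := as i1 + n)"
    have "a' \<in> E" using cl as(1) unfolding a'_def by blast
    moreover have "dgr a' = k" unfolding a'_def dgr_upd n_def using k by simp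
    moreover have "wt w a' = m * k + f as"
      unfolding a'_def wt_upd f_def m_def n_def using k by (simp add: algebra_simps)
    ultimately show "(m * k + f as, k) \<in> supp_set w E" unfolding supp_set_def
      by (intro image_eqI[where x=a']) auto
    fix d assume "(d, k) \<in> supp_set w E"
    then obtain a where a: "a \<in> E" "d = wt w a" "k = dgr a" unfolding supp_set_def by auto
    then have "d = f a + m * k" unfolding f_def by simp
    then show "m * k + f as \<le> d" using asmin[OF a(1)] by simp
  qed
qed

lemma comb_main:
  fixes C :: "('v::finite \<Rightarrow> nat) set" and w :: "'v \<Rightarrow> int"
  assumes "\<forall>a\<in>C. \<forall>i. i \<notin> I \<longrightarrow> a i = 0" "\<forall>a\<in>C. \<forall>b. b \<le> a \<longrightarrow> b \<in> C"
  shows "ELmin (supp_set w C)"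
  using assms
proof (induction "card I" arbitrary: I C rule: less_induct)
  case less
  show ?case
  proof (cases "I = {}")
    case True
    then have "a \<in> C \<Longrightarrow> dgr a = 0" for a using less.prems(1) unfolding dgr_def by auto
    then show ?thesis unfolding ELmin_def supp_set_def
      by (intro disjI1 exI[of _ 1]) auto
  next
    case False
    have fin: "finite I" by simp
    have "Min (w ` I) \<in> w ` I" using fin False by simp
    then obtain i1 where i1a: "i1 \<in> I" "w i1 = Min (w ` I)" by auto
    have i1: "i1 \<in> I" "\<forall>i\<in>I. w i1 \<le> w i" using i1a fin by auto
    define D where "D c = {b. b i1 = 0 \<and> b(i1:=c) \<in> C}" for c
    have Dsuc: "D (Suc c) \<subseteq> D c" for c
    proof
      fix b assume "b \<in> D (Suc c)"
      then have "b i1 = 0" "b(i1 := Suc c) \<in> C" unfolding D_def by auto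
      moreover have "b(i1 := c) \<le> b(i1 := Suc c)" by (simp add: le_fun_def)
      ultimately show "b \<in> D c" using less.prems(2) unfolding D_def by blast
    qed
    have Ddcl: "b \<in> D c" if "a \<in> D c" "b \<le> a" for a b c
    proof -
      have "a i1 = 0" "a(i1 := c) \<in> C" using that(1) unfolding D_def by auto
      moreover have "b i1 \<le> a i1" using that(2) by (simp add: le_fun_def)
      moreover have "b i1 = 0" using calculation by simp
      moreover have "b(i1 := c) \<le> a(i1 := c)" using that(2) by (simp add: le_fun_def)
      ultimately show ?thesis using less.prems(2) unfolding D_def by blast
    qed
    obtain B where B: "\<forall>c\<ge>B. D c = D B" using stabilize[of D] Dsuc Ddcl by blast
    define Cinf where "Cinf = {a\<in>C. \<forall>n. a(i1 := a i1 + n) \<in> C}"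
    have decomp: "C = Cinf \<union> (\<Union>c\<in>{..<B}. (\<lambda>b. b(i1:=c)) ` D c)"
    proof (intro equalityI subsetI)
      fix a assume aC: "a \<in> C"
      show "a \<in> Cinf \<union> (\<Union>c\<in>{..<B}. (\<lambda>b. b(i1:=c)) ` D c)"
      proof (cases "a i1 < B")
        case True
        have "a(i1 := 0) \<in> D (a i1)" unfolding D_def using aC by simp
        moreover have "a = (a(i1 := 0))(i1 := a i1)" by simp
        ultimately show ?thesis using True by blast
      next
        case F: False
        have "a(i1 := a i1 + n) \<in> C" for n
        proof -
          have "a(i1 := 0) \<in> D (a i1)" unfolding D_def using aC by simp
          moreover have "D (a i1) = D B" by (rule B[rule_format]) (use F in simp)
          moreover have "D (a i1 + n) = D B" by (rule B[rule_format]) (use F in simp)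
          ultimately have "a(i1 := 0) \<in> D (a i1 + n)" by simp
          then show ?thesis unfolding D_def by simp
        qed
        then show ?thesis using aC unfolding Cinf_def by blast
      qed
    next
      fix a assume "a \<in> Cinf \<union> (\<Union>c\<in>{..<B}. (\<lambda>b. b(i1:=c)) ` D c)"
      then show "a \<in> C" unfolding Cinf_def D_def by auto
    qed
    have img: "supp_set w ((\<lambda>b. b(i1:=c)) ` D c) = transl (int c * w i1) (int c) (supp_set w (D c))" for c
    proof -
      have "b \<in> D c \<Longrightarrow> (wt w (b(i1:=c)), dgr (b(i1:=c))) = (wt w b + int c * w i1, dgr b + int c)" for b
        unfolding D_def by (simp add: wt_upd dgr_upd)
      then show ?thesis unfolding supp_set_def transl_def image_image
        by (auto intro!: image_cong)
    qed
    have ELD: "ELmin (supp_set w (D c))" for c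
    proof (rule less.hyps[of "I - {i1}"])
      show "card (I - {i1}) < card I" using i1(1) fin by (metis card_Diff1_less)
      show "\<forall>a\<in>D c. \<forall>i. i \<notin> I - {i1} \<longrightarrow> a i = 0"
      proof (intro ballI allI impI)
        fix a i assume a: "a \<in> D c" and i: "i \<notin> I - {i1}"
        show "a i = 0"
        proof (cases "i = i1")
          case True then show ?thesis using a unfolding D_def by auto
        next
          case False
          then have "(a(i1:=c)) i = 0" using a i less.prems(1) unfolding D_def by blast
          then show ?thesis using False by simp
        qed
      qed
      show "\<forall>a\<in>D c. \<forall>b. b \<le> a \<longrightarrow> b \<in> D c" using Ddcl by blast
    qed
    have ELinf: "ELmin (supp_set w Cinf)"
    proof (rule ELmin_closed[of _ I _ i1])
      show "\<forall>a\<in>Cinf. \<forall>i. i \<notin> I \<longrightarrow> a i = 0" using less.prems(1) unfolding Cinf_def by blast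
      show "\<forall>i\<in>I. w i1 \<le> w i" using i1 by blast
      show "\<forall>a\<in>Cinf. \<forall>n. a(i1 := a i1 + n) \<in> Cinf"
        unfolding Cinf_def by (auto simp: add.assoc)
    qed
    have "supp_set w C = supp_set w Cinf \<union> (\<Union>c\<in>{..<B}. supp_set w ((\<lambda>b. b(i1:=c)) ` D c))"
      by (subst decomp) (simp add: supp_set_def image_Un image_UN)
    also have "\<dots> = supp_set w Cinf \<union> (\<Union>c\<in>{..<B}. transl (int c * w i1) (int c) (supp_set w (D c)))"
      using img by simp
    finally have eq: "supp_set w C = supp_set w Cinf \<union> (\<Union>c\<in>{..<B}. transl (int c * w i1) (int c) (supp_set w (D c)))" .
    show ?thesis unfolding eq
      by (intro ELmin_Un ELmin_UN ELmin_transl ELinf ELD) auto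
  qed
qed




definition decomp :: "(int \<Rightarrow> int \<Rightarrow> 'm::ab_group_add set) \<Rightarrow> 'm \<Rightarrow> (int \<times> int \<Rightarrow> 'm) \<Rightarrow> bool" where
  "decomp Mg m f \<longleftrightarrow> finite {q. f q \<noteq> 0} \<and> (\<forall>d k. f (d,k) \<in> Mg d k) \<and> m = (\<Sum>q\<in>{q. f q \<noteq> 0}. f q)"

definition hcomp :: "(int \<Rightarrow> int \<Rightarrow> 'm::ab_group_add set) \<Rightarrow> 'm \<Rightarrow> int \<times> int \<Rightarrow> 'm" where
  "hcomp Mg m = (THE f. decomp Mg m f)"

lemma sum_supp:
  assumes "finite A" "{q. f q \<noteq> 0} \<subseteq> A"
  shows "(\<Sum>q\<in>{q. f q \<noteq> 0}. f q) = sum f A"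
  using assms by (intro sum.mono_neutral_left) auto

definition monom1 :: "('v::finite \<Rightarrow> nat) \<Rightarrow> ('v, 'k::field) mpoly" where
  "monom1 b = Poly_Mapping.single (Abs_poly_mapping b) 1"

lemma lookup_Abs_fin [simp]: "Poly_Mapping.lookup (Abs_poly_mapping (b :: 'v::finite \<Rightarrow> nat)) = b"
  by (simp)

lemma Abs_lookup [simp]: "Abs_poly_mapping (Poly_Mapping.lookup a) = a"
  by (simp add: lookup_inverse)

lemma mono_bideg_Abs: "mono_bideg dg (Abs_poly_mapping b) = (wt dg b, dgr b)"
  unfolding mono_bideg_def wt_def dgr_def by simp

lemma bihom_single: "bihomogeneous dg (Poly_Mapping.single a c) (fst (mono_bideg dg a)) (snd (mono_bideg dg a))"
  unfolding bihomogeneous_def by (simp split: if_splits)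

lemma poly_expand: "p = (\<Sum>a\<in>Poly_Mapping.keys p. Poly_Mapping.single a (Poly_Mapping.lookup p a))"
  by (rule poly_mapping_eqI) (auto simp: lookup_sum lookup_single when_def in_keys_iff
      sum.delta' [where a="_" and b="\<lambda>x. Poly_Mapping.lookup p _"] sum.neutral intro: sym)


context
  fixes dg :: "'v::finite \<Rightarrow> int"
    and scale :: "('v, 'k::field) mpoly \<Rightarrow> 'm::ab_group_add \<Rightarrow> 'm"
    and Mg :: "int \<Rightarrow> int \<Rightarrow> 'm set"
  assumes BG: "bigraded_module dg scale Mg"
begin

lemmas BGc = BG[unfolded bigraded_module_def]
lemma BGmod: "module scale" using BGc by (rule conjunct1)
lemma BG0: "0 \<in> Mg d k" using conjunct1[OF conjunct2[OF BGc]] by blast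
lemma BGadd: "x \<in> Mg d k \<Longrightarrow> y \<in> Mg d k \<Longrightarrow> x + y \<in> Mg d k"
  using conjunct1[OF conjunct2[OF BGc]] by blast
lemma BGscale: "bihomogeneous dg p e j \<Longrightarrow> x \<in> Mg d k \<Longrightarrow> scale p x \<in> Mg (d + e) (k + j)"
  using conjunct1[OF conjunct2[OF conjunct2[OF BGc]]] by blast
lemma BGex1: "\<exists>!f. decomp Mg m f"
  unfolding decomp_def by (rule spec[OF conjunct2[OF conjunct2[OF conjunct2[OF BGc]]]])

lemma comp_dec: "decomp Mg m (hcomp Mg m)"
  unfolding hcomp_def using BGex1 by (rule theI')

lemma comp_unique: "decomp Mg m f \<Longrightarrow> hcomp Mg m = f"
  using BGex1 comp_dec by blast

lemma comp_add: "hcomp Mg (x + y) = (\<lambda>q. hcomp Mg x q + hcomp Mg y q)"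
proof (rule comp_unique)
  let ?fx = "hcomp Mg x" and ?fy = "hcomp Mg y"
  have dx: "decomp Mg x ?fx" and dy: "decomp Mg y ?fy" by (rule comp_dec)+
  define A where "A = {q. ?fx q \<noteq> 0} \<union> {q. ?fy q \<noteq> 0}"
  have finA: "finite A" using dx dy unfolding decomp_def A_def by auto
  have sub: "{q. ?fx q + ?fy q \<noteq> 0} \<subseteq> A" unfolding A_def by auto
  have "(\<Sum>q\<in>{q. ?fx q + ?fy q \<noteq> 0}. ?fx q + ?fy q) = (\<Sum>q\<in>A. ?fx q + ?fy q)"
    using sum_supp[OF finA sub] by simp
  also have "\<dots> = sum ?fx A + sum ?fy A" by (simp add: sum.distrib)
  also have "sum ?fx A = x" using dx sum_supp[OF finA, of ?fx] unfolding decomp_def A_def by auto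
  also have "sum ?fy A = y" using dy sum_supp[OF finA, of ?fy] unfolding decomp_def A_def by auto
  finally show "decomp Mg (x + y) (\<lambda>q. ?fx q + ?fy q)"
    unfolding decomp_def using finite_subset[OF sub finA] dx dy BGadd unfolding decomp_def by auto
qed

lemma comp_zero: "hcomp Mg 0 = (\<lambda>q. 0)"
  by (rule comp_unique) (simp add: decomp_def BG0)

lemma comp_hom:
  assumes "x \<in> Mg d k"
  shows "hcomp Mg x = (\<lambda>q. if q = (d,k) then x else 0)"
proof (rule comp_unique)
  have s: "{q. (if q = (d,k) then x else 0) \<noteq> 0} \<subseteq> {(d,k)}" by auto
  have "(\<Sum>q\<in>{q. (if q = (d,k) then x else 0) \<noteq> 0}. if q = (d,k) then x else 0) = x"
    using sum_supp[OF _ s] by simp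
  then show "decomp Mg x (\<lambda>q. if q = (d,k) then x else 0)"
    unfolding decomp_def using finite_subset[OF s] assms BG0 by auto
qed

lemma comp_sum: "finite T \<Longrightarrow> hcomp Mg (\<Sum>i\<in>T. z i) = (\<lambda>q. \<Sum>i\<in>T. hcomp Mg (z i) q)"
  by (induction T rule: finite_induct) (auto simp: comp_zero comp_add)

lemma comp_expand: "m = (\<Sum>q\<in>{q. hcomp Mg m q \<noteq> 0}. hcomp Mg m q)" "finite {q. hcomp Mg m q \<noteq> 0}"
  using comp_dec[of m] unfolding decomp_def by auto

lemma comp_in: "hcomp Mg m (d,k) \<in> Mg d k"
  using comp_dec[of m] unfolding decomp_def by auto

lemma mono_in: "h \<in> Mg d k \<Longrightarrow> scale (Poly_Mapping.single a c) h \<in> Mg (d + fst (mono_bideg dg a)) (k + snd (mono_bideg dg a))"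
  using BGscale bihom_single by blast

lemma mono_split: "scale (Poly_Mapping.single a c) h = scale (Poly_Mapping.single 0 c) (scale (Poly_Mapping.single a 1) h)"
proof -
  interpret module scale by (rule BGmod)
  show ?thesis by (simp add: mult_single)
qed

lemma mono_down:
  assumes "b' \<le> b" "scale (monom1 b') h = 0"
  shows "scale (monom1 b) h = 0"
proof -
  interpret module scale by (rule BGmod)
  have "Abs_poly_mapping b = Abs_poly_mapping (\<lambda>i. b i - b' i) + Abs_poly_mapping b'"
    by (rule poly_mapping_eqI) (use assms(1) in \<open>auto simp: lookup_add le_fun_def\<close>)
  then have eq: "monom1 b = monom1 (\<lambda>i. b i - b' i) * monom1 b'"
    unfolding monom1_def by (simp add: mult_single)
  have "scale (monom1 b) h = scale (monom1 (\<lambda>i. b i - b' i)) (scale (monom1 b') h)"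
    by (simp only: scale_scale eq)
  then show ?thesis using assms(2) by simp
qed

end




definition Cset :: "(('v::finite, 'k::field) mpoly \<Rightarrow> 'm::ab_group_add \<Rightarrow> 'm) \<Rightarrow> 'm \<Rightarrow> ('v \<Rightarrow> nat) set" where
  "Cset scale h = {b. scale (monom1 b) h \<noteq> 0}"

definition Jset :: "(int \<Rightarrow> int \<Rightarrow> 'm::ab_group_add set) \<Rightarrow> 'm set \<Rightarrow> ('m \<times> (int \<times> int)) set" where
  "Jset Mg G = {(g,q). g \<in> G \<and> hcomp Mg g q \<noteq> 0}"

context
  fixes dg :: "'v::finite \<Rightarrow> int"
    and scale :: "('v, 'k::field) mpoly \<Rightarrow> 'm::ab_group_add \<Rightarrow> 'm"
    and Mg :: "int \<Rightarrow> int \<Rightarrow> 'm set"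
  assumes BG: "bigraded_module dg scale Mg"
begin

lemma supp_char:
  assumes GG: "module.span scale G = UNIV"
  shows "{(d,k). Mg d k \<noteq> {0}} =
    (\<Union>(g,q)\<in>Jset Mg G. transl (fst q) (snd q) (supp_set dg (Cset scale (hcomp Mg g q))))"
    (is "?L = ?R")
proof -
  interpret module scale by (rule BGmod[OF BG])
  define P where "P x \<longleftrightarrow> (\<forall>q. hcomp Mg x q \<noteq> 0 \<longrightarrow> q \<in> ?R)" for x
  have P_add: "P x \<Longrightarrow> P y \<Longrightarrow> P (x + y)" for x y
  proof -
    assume px: "P x" and py: "P y"
    show "P (x + y)" unfolding P_def comp_add[OF BG]
    proof (intro allI impI)
      fix q assume "hcomp Mg x q + hcomp Mg y q \<noteq> 0"
      then have "hcomp Mg x q \<noteq> 0 \<or> hcomp Mg y q \<noteq> 0" by auto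
      then show "q \<in> ?R" using px py unfolding P_def by blast
    qed
  qed
  have P_zero: "P 0" unfolding P_def comp_zero[OF BG] by auto
  have P_sum: "finite T \<Longrightarrow> (\<And>i. i \<in> T \<Longrightarrow> P (z i)) \<Longrightarrow> P (\<Sum>i\<in>T. z i)" for T and z :: "'b \<Rightarrow> 'm"
    by (induction T rule: finite_induct) (auto intro: P_add P_zero)
  have P_term: "P (scale (Poly_Mapping.single a c) (hcomp Mg g q))" if g: "g \<in> G" for g q a c
  proof -
    define h where "h = hcomp Mg g q"
    define t where "t = scale (Poly_Mapping.single a c) h"
    have hin: "h \<in> Mg (fst q) (snd q)" unfolding h_def using comp_in[OF BG, of g "fst q" "snd q"] by simp
    define e where "e = fst (mono_bideg dg a)"
    define j where "j = snd (mono_bideg dg a)"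
    have tin: "t \<in> Mg (fst q + e) (snd q + j)" unfolding t_def e_def j_def by (rule mono_in[OF BG hin])
    have ct: "hcomp Mg t = (\<lambda>q'. if q' = (fst q + e, snd q + j) then t else 0)" by (rule comp_hom[OF BG tin])
    show ?thesis unfolding P_def h_def[symmetric] t_def[symmetric]
    proof (intro allI impI)
      fix q' assume "hcomp Mg t q' \<noteq> 0"
      then have q': "q' = (fst q + e, snd q + j)" and t0: "t \<noteq> 0" using ct by (auto split: if_splits)
      have h0: "h \<noteq> 0" using t0 unfolding t_def by auto
      have "scale (Poly_Mapping.single a 1) h \<noteq> 0"
        using t0 mono_split[OF BG, of a c h] unfolding t_def by (metis scale_zero_right)
      then have bC: "Poly_Mapping.lookup a \<in> Cset scale h" unfolding Cset_def monom1_def by simp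
      have ej: "(e, j) = (wt dg (Poly_Mapping.lookup a), dgr (Poly_Mapping.lookup a))"
        unfolding e_def j_def using mono_bideg_Abs[of dg "Poly_Mapping.lookup a"] by simp
      have "q' \<in> transl (fst q) (snd q) (supp_set dg (Cset scale h))"
        unfolding transl_def supp_set_def q' using bC ej
        by (auto simp: image_iff intro!: bexI[of _ "Poly_Mapping.lookup a"])
      moreover have "(g, q) \<in> Jset Mg G" unfolding Jset_def using g h0 h_def by auto
      ultimately show "q' \<in> ?R" unfolding h_def by blast
    qed
  qed
  have P_gen: "P (scale r g)" if "g \<in> G" for r g
  proof -
    have "scale r g = scale (\<Sum>a\<in>Poly_Mapping.keys r. Poly_Mapping.single a (Poly_Mapping.lookup r a))
          (\<Sum>q\<in>{q. hcomp Mg g q \<noteq> 0}. hcomp Mg g q)"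
      using poly_expand[of r] comp_expand(1)[OF BG, of g] by simp
    also have "\<dots> = (\<Sum>a\<in>Poly_Mapping.keys r. \<Sum>q\<in>{q. hcomp Mg g q \<noteq> 0}.
          scale (Poly_Mapping.single a (Poly_Mapping.lookup r a)) (hcomp Mg g q))"
      by (simp add: scale_sum_left scale_sum_right) (rule sum.swap)
    finally have eq: "scale r g = \<dots>" .
    show ?thesis unfolding eq
      by (intro P_sum) (auto intro: P_term that comp_expand(2)[OF BG])
  qed
  show ?thesis
  proof (intro equalityI subsetI)
    fix p assume "p \<in> ?L"
    then obtain d k where p: "p = (d,k)" and "Mg d k \<noteq> {0}" by auto
    then obtain x where x: "x \<in> Mg d k" "x \<noteq> 0" using BG0[OF BG] by blast
    have "x \<in> span G" using GG by simp
    then obtain T r where T: "finite T" "T \<subseteq> G" "x = (\<Sum>g\<in>T. scale (r g) g)"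
      unfolding span_explicit by blast
    have "P x" unfolding T(3) using T(1,2) by (intro P_sum P_gen) auto
    moreover have "hcomp Mg x (d,k) = x" using comp_hom[OF BG x(1)] by simp
    ultimately have "hcomp Mg x (d,k) \<noteq> 0" using x(2) by simp
    then show "p \<in> ?R" using \<open>P x\<close>[unfolded P_def, rule_format, of "(d,k)"] p by simp
  next
    fix p assume "p \<in> ?R"
    then obtain gq where gq0: "gq \<in> Jset Mg G"
      and p0: "p \<in> (case gq of (g,q) \<Rightarrow> transl (fst q) (snd q) (supp_set dg (Cset scale (hcomp Mg g q))))"
      by blast
    obtain g q where gqe: "gq = (g,q)" by (cases gq)
    have "p \<in> transl (fst q) (snd q) (supp_set dg (Cset scale (hcomp Mg g q)))" using p0 gqe by simp
    then obtain z where z: "z \<in> supp_set dg (Cset scale (hcomp Mg g q))" "p = (fst z + fst q, snd z + snd q)"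
      unfolding transl_def by (auto split: prod.splits)
    then obtain b where b: "b \<in> Cset scale (hcomp Mg g q)" and p: "p = (wt dg b + fst q, dgr b + snd q)"
      unfolding supp_set_def by auto
    have hin: "hcomp Mg g q \<in> Mg (fst q) (snd q)" using comp_in[OF BG, of g "fst q" "snd q"] by simp
    have "scale (monom1 b) (hcomp Mg g q) \<in> Mg (fst q + wt dg b) (snd q + dgr b)"
      using mono_in[OF BG hin, of "Abs_poly_mapping b" 1] unfolding monom1_def mono_bideg_Abs by simp
    moreover have "scale (monom1 b) (hcomp Mg g q) \<noteq> 0" using b unfolding Cset_def by simp
    ultimately show "p \<in> ?L" using p by (auto simp: add.commute)
  qed
qed

end




definition negS :: "(int \<times> int) set \<Rightarrow> (int \<times> int) set" where
  "negS S = (\<lambda>(d,k). (-d,k)) ` S"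

lemma negS_mem: "(x,k) \<in> negS S \<longleftrightarrow> (-x,k) \<in> S"
  unfolding negS_def by (force simp: image_iff)

lemma negS_fam:
  fixes w :: "'v::finite \<Rightarrow> int"
  shows "negS (\<Union>x\<in>J. transl (u x) (v x) (supp_set w (Cf x))) =
   (\<Union>x\<in>J. transl (- u x) (v x) (supp_set (\<lambda>i. - w i) (Cf x)))"
proof -
  have wn: "wt (\<lambda>i. - w i) a = - wt w a" for a :: "'v \<Rightarrow> nat"
    unfolding wt_def by (simp add: sum_negf)
  show ?thesis
    unfolding negS_def transl_def supp_set_def image_UN image_image
    by (simp add: wn)
qed

lemma ELmin_fam:
  fixes Cf :: "'x \<Rightarrow> ('v::finite \<Rightarrow> nat) set"
  assumes "finite J" "\<And>x a b. x \<in> J \<Longrightarrow> a \<in> Cf x \<Longrightarrow> b \<le> a \<Longrightarrow> b \<in> Cf x"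
  shows "ELmin (\<Union>x\<in>J. transl (u x) (v x) (supp_set w (Cf x)))"
  using assms(1)
proof (rule ELmin_UN)
  fix x assume "x \<in> J"
  show "ELmin (transl (u x) (v x) (supp_set w (Cf x)))"
    by (intro ELmin_transl comb_main[where I=UNIV]) (use assms(2) \<open>x \<in> J\<close> in auto)
qed

theorem proposition2p5:
  fixes dg :: "'v::finite \<Rightarrow> int"
    and scale :: "('v, 'k::field) mpoly \<Rightarrow> 'm::ab_group_add \<Rightarrow> 'm"
    and Mg :: "int \<Rightarrow> int \<Rightarrow> 'm set"
  assumes "\<And>i. dg i \<ge> 1"
    and "bigraded_module dg scale Mg"
    and "finitely_generated_module scale"
  shows "(\<exists>k0. \<forall>k\<ge>k0. \<forall>d. Mg d k = {0})
       \<or> (\<exists>a b c e k0 :: int. \<forall>k\<ge>k0.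
             Mg (a * k + b) k \<noteq> {0} \<and> (\<forall>d. Mg d k \<noteq> {0} \<longrightarrow> a * k + b \<le> d) \<and>
             Mg (c * k + e) k \<noteq> {0} \<and> (\<forall>d. Mg d k \<noteq> {0} \<longrightarrow> d \<le> c * k + e))"
proof -
  note BG = assms(2)
  obtain G where G: "finite G" "module.span scale G = UNIV"
    using assms(3) unfolding finitely_generated_module_def by blast
  define S where "S = {(d,k). Mg d k \<noteq> {0}}"
  define J where "J = Jset Mg G"
  define Cf where "Cf x = Cset scale (hcomp Mg (fst x) (snd x))" for x
  have finJ: "finite J"
  proof -
    have "J \<subseteq> Sigma G (\<lambda>g. {q. hcomp Mg g q \<noteq> 0})" unfolding J_def Jset_def by auto
    moreover have "finite (Sigma G (\<lambda>g. {q. hcomp Mg g q \<noteq> 0}))"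
      using G(1) comp_expand(2)[OF BG] by (intro finite_SigmaI) auto
    ultimately show ?thesis by (rule finite_subset)
  qed
  have dcl: "b \<in> Cf x" if "a \<in> Cf x" "b \<le> a" for x a b
    using that mono_down[OF BG] unfolding Cf_def Cset_def by blast
  have Seq: "S = (\<Union>x\<in>J. transl (fst (snd x)) (snd (snd x)) (supp_set dg (Cf x)))"
    unfolding S_def supp_char[OF BG G(2)] J_def Cf_def by (simp add: case_prod_unfold)
  have EL1: "ELmin S" unfolding Seq using finJ dcl by (rule ELmin_fam)
  have EL2: "ELmin (negS S)" unfolding Seq negS_fam using finJ dcl by (rule ELmin_fam)
  have Smem: "(d,k) \<in> S \<longleftrightarrow> Mg d k \<noteq> {0}" for d k unfolding S_def by simp
  consider (E) k0 where "\<forall>k\<ge>k0. \<forall>d. (d,k) \<notin> S"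
    | (L) a b k1 where "\<forall>k\<ge>k1. (a*k+b,k) \<in> S \<and> (\<forall>d. (d,k) \<in> S \<longrightarrow> a*k+b \<le> d)"
    using EL1 unfolding ELmin_def by blast
  then show ?thesis
  proof cases
    case E
    then show ?thesis using Smem by blast
  next
    case L
    consider (E2) k2 where "\<forall>k\<ge>k2. \<forall>d. (d,k) \<notin> negS S"
      | (L2) a' b' k2 where "\<forall>k\<ge>k2. (a'*k+b',k) \<in> negS S \<and> (\<forall>d. (d,k) \<in> negS S \<longrightarrow> a'*k+b' \<le> d)"
      using EL2 unfolding ELmin_def by blast
    then show ?thesis
    proof cases
      case E2
      have "(a * max k1 k2 + b, max k1 k2) \<in> S" using L by simp
      then have "(-(a * max k1 k2 + b), max k1 k2) \<in> negS S" by (subst negS_mem) (simp add: add.commute)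
      then show ?thesis using E2 by auto
    next
      case L2
      show ?thesis
      proof (rule disjI2, rule exI[of _ a], rule exI[of _ b], rule exI[of _ "-a'"], rule exI[of _ "-b'"],
          rule exI[of _ "max k1 k2"], rule allI, rule impI, intro conjI)
        fix k assume k: "max k1 k2 \<le> k"
        show "Mg (a * k + b) k \<noteq> {0}" using L k Smem by auto
        show "\<forall>d. Mg d k \<noteq> {0} \<longrightarrow> a * k + b \<le> d" using L k Smem by auto
        have "(a'*k+b',k) \<in> negS S" using L2 k by auto
        then have "(-(a'*k+b'),k) \<in> S" using negS_mem by simp
        moreover have "-(a'*k+b') = - a' * k + - b'" by simp
        ultimately show "Mg (- a' * k + - b') k \<noteq> {0}" using Smem by simp
        show "\<forall>d. Mg d k \<noteq> {0} \<longrightarrow> d \<le> - a' * k + - b'"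
        proof (intro allI impI)
          fix d assume "Mg d k \<noteq> {0}"
          then have "(-d, k) \<in> negS S" using Smem negS_mem by simp
          then have "a'*k+b' \<le> -d" using L2 k by auto
          then show "d \<le> - a' * k + - b'" by simp
        qed
      qed
    qed
  qed
qed


end
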